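(* Let $n,m$ be integers with $0<m<n$. Then $\mathcal{W}_n^m=\mathrm{span}\{\tilde\psi_{n,k}^m:\ k=1,\ldots,2n\}$ and $$\langle\tilde\psi_{n,k}^m,\tilde\psi_{n,h}^m\rangle_{L^2_w}=\delta_{k,h},\qquad k,h=1,\ldots,2n.$$
   Context: Let $w(x)=(1-x^2)^{-1/2}$ on $[-1,1]$ and $\langle f,g\rangle_{L^2_w}=\int_{-1}^1 fgw\,dx$. The orthonormal Chebyshev polynomials are $p_0=\sqrt{1/\pi}$, $p_r(x)=\sqrt{2/\pi}\cos(r\arccos x)$, $r\ge1$. Chebyshev nodes $X_N=\{x_k^N=\cos\frac{(2k-1)\pi}{2N}:k=1,\ldots,N\}$; note $X_n\subset X_{3n}$, and $Y_n=X_{3n}\setminus X_n=\{y_k^n:k=1,\ldots,2n\}$ (in some fixed enumeration). For $0<m<N$: $\mu_{N,r}^m=1$ if $0\le r\le N-m$, $\frac{m+N-r}{2m}$ if $N-m<r<N+m$, $0$ otherwise; for $r=0,\ldots,N-1$, $q_{N,r}^m=p_r$ if $r\le N-m$ and $q_{N,r}^m=\mu_{N,r}^mp_r-\mu_{N,2N-r}^mp_{2N-r}$ if $N-m<r<N$. Let $\mathcal{V}_N^m=\mathrm{span}\{q_{N,r}^m\}_{r=0}^{N-1}$; then $\mathcal{V}_n^m\subset\mathcal{V}_{3n}^m$ and $\mathcal{W}_n^m$ denotes the orthogonal complement of $\mathcal{V}_n^m$ in $\mathcal{V}_{3n}^m$ w.r.t. $\langle\cdot,\cdot\rangle_{L^2_w}$.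 For $r=n,\ldots,3n-1$ define $\tilde q_{n,r}^m=\mu_{n,r}^mp_{2n-r}+\mu_{n,2n-r}^mp_r$ if $n\le r<n+m$, $\tilde q_{n,r}^m=p_r$ if $n+m\le r\le3n-m$, $\tilde q_{n,r}^m=q_{3n,r}^m=\mu_{3n,r}^mp_r-\mu_{3n,6n-r}^mp_{6n-r}$ if $3n-m<r<3n$; and $v_{n,r}^m=\frac{m^2+(n-r)^2}{2m^2}$ if $n<r<n+m$, $v_{n,r}^m=1$ if $r=n$ or $n+m\le r\le3n-m$, $v_{n,r}^m=\frac{m^2+(3n-r)^2}{2m^2}$ if $3n-m<r<3n$. For $k=1,\ldots,2n$ let $\sigma_{r,k}^n=\sqrt{\frac{\pi}{3n}}\cdot c_{r,k}$ where $c_{r,k}=p_n(y_k^n)$ if $r=n$, $\frac{p_r(y_k^n)+p_{2n-r}(y_k^n)}{\sqrt2}$ if $n<r<2n$, $\frac{p_{2n}(y_k^n)+\sqrt2p_0(y_k^n)}{\sqrt3}$ if $r=2n$, $\sqrt{3/2}\,p_r(y_k^n)$ if $2n<r<3n$. The orthonormal VP wavelets are $\tilde\psi_{n,k}^m(x)=\sum_{r=n}^{3n-1}\sigma_{r,k}^n\,\tilde q_{n,r}^m(x)/\sqrt{v_{n,r}^m}$, $k=1,\ldots,2n$. *)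

theory Defs
  imports "HOL-Analysis.Analysis"
begin

definition cheb_inner :: "(real \<Rightarrow> real) \<Rightarrow> (real \<Rightarrow> real) \<Rightarrow> real" where
  "cheb_inner f g = (LINT x:{-1<..<1}|lborel. f x * g x / sqrt (1 - x\<^sup>2))"

definition cheb_p :: "nat \<Rightarrow> real \<Rightarrow> real" where
  "cheb_p r x = (if r = 0 then sqrt (1 / pi) else sqrt (2 / pi) * cos (real r * arccos x))"

definition cheb_nodes :: "nat \<Rightarrow> real set" where
  "cheb_nodes N = (\<lambda>k. cos ((2 * real k - 1) * pi / (2 * real N))) ` {1..N}"

definition Y_nodes :: "nat \<Rightarrow> real set" where
  "Y_nodes n = cheb_nodes (3 * n) - cheb_nodes n"

definition lin_span :: "'i set \<Rightarrow> ('i \<Rightarrow> real \<Rightarrow> real) \<Rightarrow> (real \<Rightarrow> real) set" where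
  "lin_span I g = {\<lambda>x. \<Sum>i\<in>I. c i * g i x | c. True}"

definition mu :: "nat \<Rightarrow> nat \<Rightarrow> nat \<Rightarrow> real" where
  "mu N m r = (if r \<le> N - m then 1
     else if r < N + m then (real m + real N - real r) / (2 * real m) else 0)"

definition qf :: "nat \<Rightarrow> nat \<Rightarrow> nat \<Rightarrow> real \<Rightarrow> real" where
  "qf N m r = (if r \<le> N - m then cheb_p r
     else (\<lambda>x. mu N m r * cheb_p r x - mu N m (2 * N - r) * cheb_p (2 * N - r) x))"

definition V_space :: "nat \<Rightarrow> nat \<Rightarrow> (real \<Rightarrow> real) set" where
  "V_space N m = lin_span {..<N} (qf N m)"

definition W_space :: "nat \<Rightarrow> nat \<Rightarrow> (real \<Rightarrow> real) set" where
  "W_space n m = {f \<in> V_space (3 * n) m. \<forall>g \<in> V_space n m. cheb_inner f g = 0}"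

definition tq :: "nat \<Rightarrow> nat \<Rightarrow> nat \<Rightarrow> real \<Rightarrow> real" where
  "tq n m r = (if n \<le> r \<and> r < n + m then
        (\<lambda>x. mu n m r * cheb_p (2 * n - r) x + mu n m (2 * n - r) * cheb_p r x)
     else if n + m \<le> r \<and> r \<le> 3 * n - m then cheb_p r
     else (\<lambda>x. mu (3 * n) m r * cheb_p r x - mu (3 * n) m (6 * n - r) * cheb_p (6 * n - r) x))"

definition vv :: "nat \<Rightarrow> nat \<Rightarrow> nat \<Rightarrow> real" where
  "vv n m r = (if n < r \<and> r < n + m then
        ((real m)\<^sup>2 + (real n - real r)\<^sup>2) / (2 * (real m)\<^sup>2)
     else if r = n \<or> (n + m \<le> r \<and> r \<le> 3 * n - m) then 1
     else ((real m)\<^sup>2 + (3 * real n - real r)\<^sup>2) / (2 * (real m)\<^sup>2))"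

text \<open>c_{r,k}, with y the fixed enumeration of Y_n (so y k = y_k^n).\<close>
definition cc :: "nat \<Rightarrow> (nat \<Rightarrow> real) \<Rightarrow> nat \<Rightarrow> nat \<Rightarrow> real" where
  "cc n y r k = (if r = n then cheb_p n (y k)
     else if n < r \<and> r < 2 * n then (cheb_p r (y k) + cheb_p (2 * n - r) (y k)) / sqrt 2
     else if r = 2 * n then (cheb_p (2 * n) (y k) + sqrt 2 * cheb_p 0 (y k)) / sqrt 3
     else sqrt (3 / 2) * cheb_p r (y k))"

definition sigma :: "nat \<Rightarrow> (nat \<Rightarrow> real) \<Rightarrow> nat \<Rightarrow> nat \<Rightarrow> real" where
  "sigma n y r k = sqrt (pi / (3 * real n)) * cc n y r k"

definition psi :: "nat \<Rightarrow> nat \<Rightarrow> (nat \<Rightarrow> real) \<Rightarrow> nat \<Rightarrow> real \<Rightarrow> real" where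
  "psi n m y k x = (\<Sum>r\<in>{n..<3 * n}. sigma n y r k * tq n m r x / sqrt (vv n m r))"

end

theory Submission
  imports Defs "Jordan_Normal_Form.Determinant"
begin


lemma arccos_lim_left: "(arccos \<longlongrightarrow> pi) (at_right (-1))"
proof -
  have "(-1::real) \<in> {-1..1}" by simp
  then have "(arccos \<longlongrightarrow> arccos (-1)) (at (-1) within {-1..1})"
    using continuous_on_arccos' unfolding continuous_on_def by blast
  then show ?thesis by (simp add: at_within_Icc_at_right)
qed

lemma arccos_lim_right: "(arccos \<longlongrightarrow> 0) (at_left 1)"
proof -
  have "(1::real) \<in> {-1..1}" by simp
  then have "(arccos \<longlongrightarrow> arccos 1) (at 1 within {-1..1})"
    using continuous_on_arccos' unfolding continuous_on_def by blast
  then show ?thesis by (simp add: at_within_Icc_at_left)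
qed

lemma FTC_arccos:
  fixes G g :: "real \<Rightarrow> real"
  assumes dG: "\<And>t. DERIV G t :> g t" and cg: "continuous_on UNIV g"
    and gb: "\<And>t. g t \<ge> 0"
  shows "set_integrable lborel {-1<..<1} (\<lambda>x. g (arccos x) / sqrt (1 - x\<^sup>2))"
    "(LINT x:{-1<..<1}|lborel. g (arccos x) / sqrt (1 - x\<^sup>2)) = G pi - G 0"
proof -
  define F where "F x = - G (arccos x)" for x
  have cG: "continuous_on UNIV G"
    using dG by (meson DERIV_isCont continuous_at_imp_continuous_on)
  have D: "DERIV F x :> g (arccos x) / sqrt (1 - x\<^sup>2)" if "-1 < x" "x < 1" for x
  proof -
    have "DERIV (\<lambda>x. G (arccos x)) x :> g (arccos x) * inverse (- sqrt (1 - x\<^sup>2))"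
      using DERIV_chain2[OF dG DERIV_arccos[OF that]] .
    then have "DERIV F x :> - (g (arccos x) * inverse (- sqrt (1 - x\<^sup>2)))"
      unfolding F_def by (rule DERIV_minus)
    then show ?thesis by (simp add: divide_inverse)
  qed
  have C: "isCont (\<lambda>x. g (arccos x) / sqrt (1 - x\<^sup>2)) x" if "-1 < x" "x < 1" for x
  proof -
    have "1 - x\<^sup>2 > 0" using that by (simp add: abs_square_less_1)
    moreover have "isCont (\<lambda>x. g (arccos x)) x"
      using isCont_arccos[OF that] cg
      by (metis UNIV_I continuous_on_eq_continuous_at isCont_o2 open_UNIV)
    ultimately show ?thesis by (intro continuous_intros) auto
  qed
  have NN: "AE x in lborel. ereal (-1) < ereal x \<longrightarrow> ereal x < ereal 1 \<longrightarrow> 0 \<le> g (arccos x) / sqrt (1 - x\<^sup>2)"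
    by (intro AE_I2 impI divide_nonneg_nonneg gb) (auto simp: abs_square_le_1)
  have A: "((F \<circ> real_of_ereal) \<longlongrightarrow> - G pi) (at_right (ereal (-1)))"
    unfolding ereal_tendsto_simps1 F_def
    by (intro tendsto_minus isCont_tendsto_compose[OF _ arccos_lim_left])
       (use cG in \<open>auto simp: continuous_on_eq_continuous_at\<close>)
  have B: "((F \<circ> real_of_ereal) \<longlongrightarrow> - G 0) (at_left (ereal 1))"
    unfolding ereal_tendsto_simps1 F_def
    by (intro tendsto_minus isCont_tendsto_compose[OF _ arccos_lim_right])
       (use cG in \<open>auto simp: continuous_on_eq_continuous_at\<close>)
  note R = interval_integral_FTC_nonneg[of "ereal (-1)" "ereal 1" F "\<lambda>x. g (arccos x) / sqrt (1 - x\<^sup>2)", OF _ _ _ NN A B]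
  have R1: "set_integrable lborel (einterval (ereal (-1)) (ereal 1)) (\<lambda>x. g (arccos x) / sqrt (1 - x\<^sup>2))"
    and R2: "(LBINT x=ereal (-1)..ereal 1. g (arccos x) / sqrt (1 - x\<^sup>2)) = - G 0 - - G pi"
    using R D C by auto
  show "set_integrable lborel {-1<..<1} (\<lambda>x. g (arccos x) / sqrt (1 - x\<^sup>2))"
    using R1 by simp
  show "(LINT x:{-1<..<1}|lborel. g (arccos x) / sqrt (1 - x\<^sup>2)) = G pi - G 0"
    using R2 by (simp add: interval_lebesgue_integral_def)
qed

lemma cos_prod_int:
  fixes r s :: nat
  shows "set_integrable lborel {-1<..<1} (\<lambda>x. cos (r * arccos x) * cos (s * arccos x) / sqrt (1 - x\<^sup>2))"
    "(LINT x:{-1<..<1}|lborel. cos (r * arccos x) * cos (s * arccos x) / sqrt (1 - x\<^sup>2))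
       = (if r = s then (if r = 0 then pi else pi / 2) else 0)"
proof -
  define S where "S j t = (if j = 0 then t else sin (j * t) / j)" for j t :: real
  have dS: "DERIV (S j) t :> cos (j * t)" for j t
  proof (cases "j = 0")
    case True
    have "S j = (\<lambda>t. t)" using True by (auto simp: S_def fun_eq_iff)
    then show ?thesis using True by (simp add: DERIV_ident)
  next
    case False
    have "DERIV (\<lambda>t. sin (j * t) / j) t :> cos (j * t) * (j * 1) / j"
      using False by (intro derivative_eq_intros) auto
    moreover have "S j = (\<lambda>t. sin (j * t) / j)" using False by (auto simp: S_def fun_eq_iff)
    ultimately show ?thesis using False by simp
  qed
  define Gc where "Gc t = (S (real r - real s) t + S (real r + real s) t) / 2" for t
  have dGc: "DERIV Gc t :> cos (r * t) * cos (s * t)" for t :: real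
  proof -
    have "DERIV Gc t :> (cos ((real r - real s) * t) + cos ((real r + real s) * t)) / 2"
      unfolding Gc_def by (intro DERIV_cdivide DERIV_add dS)
    then show ?thesis by (simp add: cos_times_cos algebra_simps)
  qed
  have G1: "DERIV (\<lambda>t. Gc t + t) t :> cos (r * t) * cos (s * t) + 1" for t :: real
    by (intro DERIV_add dGc DERIV_ident)
  have G2: "DERIV (\<lambda>t. t) t :> 1" for t :: real
    by (rule DERIV_ident)
  have nn: "0 \<le> cos (r * t) * cos (s * t) + 1" for t :: real
  proof -
    have "\<bar>cos (r * t) * cos (s * t)\<bar> \<le> 1"
      by (simp add: abs_mult mult_le_one)
    then show ?thesis by linarith
  qed
  note I1 = FTC_arccos[of "\<lambda>t. Gc t + t" "\<lambda>t. cos (r * t) * cos (s * t) + 1", OF G1 _ nn]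
  note I2 = FTC_arccos[of "\<lambda>t. t" "\<lambda>t. 1", OF G2]
  have c1: "continuous_on UNIV (\<lambda>t::real. cos (r * t) * cos (s * t) + 1)"
    by (intro continuous_intros)
  have i1: "set_integrable lborel {-1<..<1} (\<lambda>x. (cos (r * arccos x) * cos (s * arccos x) + 1) / sqrt (1 - x\<^sup>2))"
    and v1: "(LINT x:{-1<..<1}|lborel. (cos (r * arccos x) * cos (s * arccos x) + 1) / sqrt (1 - x\<^sup>2)) = Gc pi + pi - (Gc 0 + 0)"
    using I1[OF c1] by auto
  have i2: "set_integrable lborel {-1<..<1} (\<lambda>x. 1 / sqrt (1 - x\<^sup>2))"
    and v2: "(LINT x:{-1<..<1}|lborel. 1 / sqrt (1 - x\<^sup>2)) = pi - 0"
    using I2 by auto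
  have eq: "(\<lambda>x. cos (r * arccos x) * cos (s * arccos x) / sqrt (1 - x\<^sup>2)) =
     (\<lambda>x. (cos (r * arccos x) * cos (s * arccos x) + 1) / sqrt (1 - x\<^sup>2) - 1 / sqrt (1 - x\<^sup>2))"
    by (auto simp: field_simps diff_divide_distrib add_divide_distrib)
  show "set_integrable lborel {-1<..<1} (\<lambda>x. cos (r * arccos x) * cos (s * arccos x) / sqrt (1 - x\<^sup>2))"
    unfolding eq using i1 i2 by (rule set_integral_diff)
  have "(LINT x:{-1<..<1}|lborel. cos (r * arccos x) * cos (s * arccos x) / sqrt (1 - x\<^sup>2)) = Gc pi - Gc 0"
    unfolding eq using i1 i2 v1 v2 by (subst set_integral_diff) auto
  also have "Gc 0 = 0" by (simp add: Gc_def S_def)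
  also have "S j pi = (if j = 0 then pi else 0)" if "j \<in> \<int>" for j
    using that sin_times_pi_eq_0[of j] by (auto simp: S_def mult.commute)
  then have "Gc pi = ((if real r - real s = 0 then pi else 0) + (if real r + real s = 0 then pi else 0)) / 2"
    unfolding Gc_def by simp
  finally show "(LINT x:{-1<..<1}|lborel. cos (r * arccos x) * cos (s * arccos x) / sqrt (1 - x\<^sup>2))
       = (if r = s then (if r = 0 then pi else pi / 2) else 0)"
    by auto
qed



lemma set_integral_sum':
  fixes f :: "'i \<Rightarrow> 'a \<Rightarrow> real"
  assumes "finite I" "\<And>i. i \<in> I \<Longrightarrow> set_integrable M A (f i)"
  shows "set_integrable M A (\<lambda>x. \<Sum>i\<in>I. f i x) \<and>
    (LINT x:A|M. (\<Sum>i\<in>I. f i x)) = (\<Sum>i\<in>I. LINT x:A|M. f i x)"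
  using assms
proof (induction I rule: finite_induct)
  case empty
  then show ?case by (simp add: set_integrable_def set_lebesgue_integral_def)
next
  case (insert i I)
  then have h1: "set_integrable M A (f i)" and h2: "set_integrable M A (\<lambda>x. \<Sum>i\<in>I. f i x)"
    and h3: "(LINT x:A|M. (\<Sum>i\<in>I. f i x)) = (\<Sum>i\<in>I. LINT x:A|M. f i x)" by auto
  show ?case using insert(1,2) set_integral_add[OF h1 h2] h3 by simp
qed

definition kap :: "nat \<Rightarrow> real" where
  "kap r = (if r = 0 then sqrt (1 / pi) else sqrt (2 / pi))"

lemma cheb_p_alt: "cheb_p r x = kap r * cos (real r * arccos x)"
  by (simp add: cheb_p_def kap_def)

lemma cheb_pp:
  shows "set_integrable lborel {-1<..<1} (\<lambda>x. cheb_p i x * cheb_p j x / sqrt (1 - x\<^sup>2))"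
    "(LINT x:{-1<..<1}|lborel. cheb_p i x * cheb_p j x / sqrt (1 - x\<^sup>2)) = (if i = j then 1 else 0)"
proof -
  have eq: "(\<lambda>x. cheb_p i x * cheb_p j x / sqrt (1 - x\<^sup>2)) =
     (\<lambda>x. (cos (i * arccos x) * cos (j * arccos x) / sqrt (1 - x\<^sup>2)) * (kap i * kap j))"
    by (auto simp: cheb_p_alt fun_eq_iff)
  show "set_integrable lborel {-1<..<1} (\<lambda>x. cheb_p i x * cheb_p j x / sqrt (1 - x\<^sup>2))"
    unfolding eq using cos_prod_int(1)[of i j] by (rule set_integrable_mult_left)
  have "(LINT x:{-1<..<1}|lborel. cheb_p i x * cheb_p j x / sqrt (1 - x\<^sup>2))
     = (if i = j then (if i = 0 then pi else pi / 2) else 0) * (kap i * kap j)"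
    unfolding eq by (simp only: set_integral_mult_left cos_prod_int(2))
  also have "\<dots> = (if i = j then 1 else 0)"
    using pi_gt_zero by (auto simp: kap_def real_sqrt_mult[symmetric])
  finally show "(LINT x:{-1<..<1}|lborel. cheb_p i x * cheb_p j x / sqrt (1 - x\<^sup>2)) = (if i = j then 1 else 0)" .
qed

definition Ev :: "nat \<Rightarrow> (nat \<Rightarrow> real) \<Rightarrow> real \<Rightarrow> real" where
  "Ev L a x = (\<Sum>i<L. a i * cheb_p i x)"

lemma inner_Ev: "cheb_inner (Ev L a) (Ev L b) = (\<Sum>i<L. a i * b i)"
proof -
  have eq: "(\<lambda>x. Ev L a x * Ev L b x / sqrt (1 - x\<^sup>2)) =
     (\<lambda>x. \<Sum>i<L. \<Sum>j<L. a i * b j * (cheb_p i x * cheb_p j x / sqrt (1 - x\<^sup>2)))"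
    by (auto simp: fun_eq_iff Ev_def sum_product sum_divide_distrib mult_ac)
  have int1: "set_integrable lborel {-1<..<1} (\<lambda>x. a i * b j * (cheb_p i x * cheb_p j x / sqrt (1 - x\<^sup>2)))" for i j
    using cheb_pp(1)[of i j] by (rule set_integrable_mult_right)
  have int2: "set_integrable lborel {-1<..<1} (\<lambda>x. \<Sum>j<L. a i * b j * (cheb_p i x * cheb_p j x / sqrt (1 - x\<^sup>2)))
     \<and> (LINT x:{-1<..<1}|lborel. \<Sum>j<L. a i * b j * (cheb_p i x * cheb_p j x / sqrt (1 - x\<^sup>2)))
      = (\<Sum>j<L. a i * b j * (if i = j then 1 else 0))" for i
  proof -
    have s: "(LINT x:{-1<..<1}|lborel. a i * b j * (cheb_p i x * cheb_p j x / sqrt (1 - x\<^sup>2)))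
      = a i * b j * (if i = j then 1 else 0)" for j
      by (simp only: set_integral_mult_right cheb_pp(2))
    show ?thesis
    using set_integral_sum'[of "{..<L}" lborel "{-1<..<1}" "\<lambda>j x. a i * b j * (cheb_p i x * cheb_p j x / sqrt (1 - x\<^sup>2))"]
      int1 s by simp
  qed
  have "cheb_inner (Ev L a) (Ev L b) = (\<Sum>i<L. \<Sum>j<L. a i * b j * (if i = j then 1 else 0))"
    unfolding cheb_inner_def eq
    using set_integral_sum'[of "{..<L}" lborel "{-1<..<1}" "\<lambda>i x. \<Sum>j<L. a i * b j * (cheb_p i x * cheb_p j x / sqrt (1 - x\<^sup>2))"]
      int2 by simp
  also have "\<dots> = (\<Sum>i<L. a i * b i)"
    by (simp add: if_distrib cong: if_cong)
  finally show ?thesis .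
qed



definition ev :: "nat \<Rightarrow> nat \<Rightarrow> real" where "ev a j = (if j = a then 1 else 0)"
definition v2 :: "real \<Rightarrow> nat \<Rightarrow> real \<Rightarrow> nat \<Rightarrow> nat \<Rightarrow> real" where
  "v2 c a d b j = c * ev a j + d * ev b j"
definition dotL :: "nat \<Rightarrow> (nat \<Rightarrow> real) \<Rightarrow> (nat \<Rightarrow> real) \<Rightarrow> real" where
  "dotL L u v = (\<Sum>j<L. u j * v j)"

lemma sum_ev: "a < L \<Longrightarrow> (\<Sum>j<L. ev a j * g j) = g a"
proof -
  assume "a < L"
  have "(\<Sum>j<L. ev a j * g j) = (\<Sum>j<L. if j = a then g a else 0)"
    by (rule sum.cong) (auto simp: ev_def)
  then show ?thesis using \<open>a < L\<close> by simp
qed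

lemma dot_ev: "a < L \<Longrightarrow> (\<Sum>j<L. ev a j * ev b j) = (if a = b then 1 else 0)"
  by (subst sum_ev) (auto simp: ev_def)

lemma dot_v2:
  assumes "a1 < L" "a2 < L"
  shows "dotL L (v2 c1 a1 c2 a2) (v2 d1 b1 d2 b2) =
    c1 * d1 * (if a1 = b1 then 1 else 0) + c1 * d2 * (if a1 = b2 then 1 else 0)
    + c2 * d1 * (if a2 = b1 then 1 else 0) + c2 * d2 * (if a2 = b2 then 1 else 0)"
proof -
  have "dotL L (v2 c1 a1 c2 a2) (v2 d1 b1 d2 b2) =
    c1 * d1 * (\<Sum>j<L. ev a1 j * ev b1 j) + c1 * d2 * (\<Sum>j<L. ev a1 j * ev b2 j)
    + c2 * d1 * (\<Sum>j<L. ev a2 j * ev b1 j) + c2 * d2 * (\<Sum>j<L. ev a2 j * ev b2 j)"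
    by (simp add: dotL_def v2_def algebra_simps sum.distrib sum_distrib_left)
  then show ?thesis using assms by (simp add: dot_ev)
qed

lemma Ev_v2: "a < L \<Longrightarrow> b < L \<Longrightarrow> Ev L (v2 c a d b) x = c * cheb_p a x + d * cheb_p b x"
proof -
  assume "a < L" "b < L"
  have "Ev L (v2 c a d b) x = c * (\<Sum>j<L. ev a j * cheb_p j x) + d * (\<Sum>j<L. ev b j * cheb_p j x)"
    unfolding Ev_def v2_def by (simp add: distrib_right sum.distrib sum_distrib_left mult.assoc)
  then show ?thesis using \<open>a < L\<close> \<open>b < L\<close> by (simp add: sum_ev)
qed

definition qfc :: "nat \<Rightarrow> nat \<Rightarrow> nat \<Rightarrow> nat \<Rightarrow> real" where
  "qfc N m r = (if r \<le> N - m then v2 1 r 0 r else v2 (mu N m r) r (- mu N m (2 * N - r)) (2 * N - r))"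

definition tqc :: "nat \<Rightarrow> nat \<Rightarrow> nat \<Rightarrow> nat \<Rightarrow> real" where
  "tqc n m r = (if n \<le> r \<and> r < n + m then v2 (mu n m r) (2 * n - r) (mu n m (2 * n - r)) r
     else if n + m \<le> r \<and> r \<le> 3 * n - m then v2 1 r 0 r
     else v2 (mu (3 * n) m r) r (- mu (3 * n) m (6 * n - r)) (6 * n - r))"

lemma qf_Ev: "r < N \<Longrightarrow> 2 * N \<le> L \<Longrightarrow> qf N m r = Ev L (qfc N m r)"
  by (auto simp: fun_eq_iff qf_def qfc_def Ev_v2)

lemma tq_Ev: "n \<le> r \<Longrightarrow> r < 3 * n \<Longrightarrow> 6 * n \<le> L \<Longrightarrow> tq n m r = Ev L (tqc n m r)"
  by (auto simp: fun_eq_iff tq_def tqc_def Ev_v2)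

lemma mu_lo1: "0 < m \<Longrightarrow> m < n \<Longrightarrow> n \<le> r \<Longrightarrow> r < n + m \<Longrightarrow> mu n m r = (real m + real n - real r) / (2 * real m)"
proof -
  assume a: "0 < m" "m < n" "n \<le> r" "r < n + m"
  then have "\<not> r \<le> n - m" by arith
  then show ?thesis using a by (simp add: mu_def)
qed
lemma mu_lo2: "0 < m \<Longrightarrow> m < n \<Longrightarrow> n \<le> r \<Longrightarrow> r < n + m \<Longrightarrow> mu n m (2 * n - r) = (real m - real n + real r) / (2 * real m)"
proof -
  assume a: "0 < m" "m < n" "n \<le> r" "r < n + m"
  then have "\<not> 2 * n - r \<le> n - m" "2 * n - r < n + m" "r \<le> 2 * n" by arith+
  then show ?thesis using a by (simp add: mu_def of_nat_diff)
qed
lemma mu_hi1: "0 < m \<Longrightarrow> 3 * n - m < r \<Longrightarrow> r < 3 * n \<Longrightarrow> mu (3 * n) m r = (real m + 3 * real n - real r) / (2 * real m)"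
proof -
  assume a: "0 < m" "3 * n - m < r" "r < 3 * n"
  then have "\<not> r \<le> 3 * n - m" "r < 3 * n + m" by arith+
  then show ?thesis using a by (simp add: mu_def)
qed
lemma mu_hi2: "0 < m \<Longrightarrow> 3 * n - m < r \<Longrightarrow> r < 3 * n \<Longrightarrow> mu (3 * n) m (6 * n - r) = (real m - 3 * real n + real r) / (2 * real m)"
proof -
  assume a: "0 < m" "3 * n - m < r" "r < 3 * n"
  then have "\<not> 6 * n - r \<le> 3 * n - m" "6 * n - r < 3 * n + m" "r \<le> 6 * n" by arith+
  then show ?thesis using a by (simp add: mu_def of_nat_diff)
qed


lemma tqc_A: "n \<le> r \<Longrightarrow> r < n + m \<Longrightarrow> tqc n m r = v2 (mu n m r) (2 * n - r) (mu n m (2 * n - r)) r"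
  by (simp add: tqc_def)
lemma tqc_B: "n + m \<le> r \<Longrightarrow> r \<le> 3 * n - m \<Longrightarrow> tqc n m r = v2 1 r 0 r"
  by (simp add: tqc_def)
lemma tqc_C: "m < n \<Longrightarrow> 3 * n - m < r \<Longrightarrow> tqc n m r = v2 (mu (3 * n) m r) r (- mu (3 * n) m (6 * n - r)) (6 * n - r)"
proof -
  assume "m < n" "3 * n - m < r"
  then have "\<not> (n \<le> r \<and> r < n + m)" "\<not> (n + m \<le> r \<and> r \<le> 3 * n - m)" by arith+
  show ?thesis unfolding tqc_def if_not_P[OF \<open>\<not> (n \<le> r \<and> r < n + m)\<close>]
    if_not_P[OF \<open>\<not> (n + m \<le> r \<and> r \<le> 3 * n - m)\<close>] by (rule refl)
qed

lemma range3:
  fixes m n r :: nat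
  assumes "m < n" "n \<le> r" "r < 3 * n"
  obtains (A) "n \<le> r" "r < n + m" | (B) "n + m \<le> r" "r \<le> 3 * n - m" | (C) "3 * n - m < r" "r < 3 * n"
  using assms by linarith

lemma sq_id: "(x::real) \<noteq> 0 \<Longrightarrow> ((x + d) / (2 * x))\<^sup>2 + ((x - d) / (2 * x))\<^sup>2 = (x\<^sup>2 + d\<^sup>2) / (2 * x\<^sup>2)"
  by (simp add: power_divide add_divide_distrib[symmetric]) (simp add: divide_simps power2_eq_square algebra_simps)

lemma sq_id2: "(x::real) \<noteq> 0 \<Longrightarrow> ((x + a - b) / (2 * x))\<^sup>2 + ((x - a + b) / (2 * x))\<^sup>2 = (x\<^sup>2 + (a - b)\<^sup>2) / (2 * x\<^sup>2)"
  by (simp add: power_divide add_divide_distrib[symmetric]) (simp add: divide_simps power2_eq_square algebra_simps)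

lemma tqc_orth:
  assumes m: "0 < m" "m < n" and L: "6 * n \<le> L"
    and r: "n \<le> r" "r < 3 * n" and s: "n \<le> s" "s < 3 * n"
  shows "dotL L (tqc n m r) (tqc n m s) = (if r = s then vv n m r else 0)"
proof (cases "r = s")
  case False
  from m(2) r show ?thesis
  proof (cases rule: range3)
    case A
    from m(2) s show ?thesis
    proof (cases rule: range3)
      case A2: A
      show ?thesis using A A2 m L False by (auto simp: tqc_A dot_v2)
    next
      case B2: B
      show ?thesis using A B2 m L False by (auto simp: tqc_A tqc_B dot_v2)
    next
      case C2: C
      show ?thesis using A C2 m L False by (auto simp: tqc_A tqc_C dot_v2)
    qed
  next
    case B
    from m(2) s show ?thesis
    proof (cases rule: range3)
      case A2: A
      show ?thesis using B A2 m L False by (auto simp: tqc_A tqc_B dot_v2)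
    next
      case B2: B
      show ?thesis using B B2 m L False by (auto simp: tqc_B dot_v2)
    next
      case C2: C
      show ?thesis using B C2 m L False by (auto simp: tqc_B tqc_C dot_v2)
    qed
  next
    case C
    from m(2) s show ?thesis
    proof (cases rule: range3)
      case A2: A
      show ?thesis using C A2 m L False by (auto simp: tqc_A tqc_C dot_v2)
    next
      case B2: B
      show ?thesis using C B2 m L False by (auto simp: tqc_B tqc_C dot_v2)
    next
      case C2: C
      show ?thesis using C C2 m L False by (auto simp: tqc_C dot_v2)
    qed
  qed
next
  case True
  have m0: "real m > 0" using m by simp
  from m(2) r show ?thesis
  proof (cases rule: range3)
    case A
    show ?thesis
    proof (cases "r = n")
      case True
      then show ?thesis using A m L \<open>r = s\<close> by (simp add: tqc_A dot_v2 mu_lo1 vv_def)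
    next
      case False
      then have "r \<noteq> 2 * n - r" "n < r" using A by arith+
      then have ne: "r \<noteq> 2 * n - r" "n < r" by auto
      have e1: "mu n m r = (real m + real n - real r) / (2 * real m)" using mu_lo1 A m by auto
      have e2: "mu n m (2 * n - r) = (real m - real n + real r) / (2 * real m)" using mu_lo2 A m by auto
      have "dotL L (tqc n m r) (tqc n m s) = (mu n m r)\<^sup>2 + (mu n m (2 * n - r))\<^sup>2"
        using A m L \<open>r = s\<close> ne by (simp add: tqc_A dot_v2 power2_eq_square)
      also have "\<dots> = ((real m)\<^sup>2 + (real n - real r)\<^sup>2) / (2 * (real m)\<^sup>2)"
        using sq_id2[of "real m" "real n" "real r"] m0 unfolding e1 e2 by simp
      also have "\<dots> = vv n m r" using ne A unfolding vv_def by simp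
      finally show ?thesis using \<open>r = s\<close> by simp
    qed
  next
    case B
    then show ?thesis using m L \<open>r = s\<close> by (simp add: tqc_B dot_v2 vv_def)
  next
    case C
    have ne: "r \<noteq> 6 * n - r" "\<not> (n < r \<and> r < n + m)" "r \<noteq> n" "\<not> (n + m \<le> r \<and> r \<le> 3 * n - m)" using C m by arith+
    have e1: "mu (3 * n) m r = (real m + 3 * real n - real r) / (2 * real m)" using mu_hi1 C m by auto
    have e2: "mu (3 * n) m (6 * n - r) = (real m - 3 * real n + real r) / (2 * real m)" using mu_hi2 C m by auto
    have "dotL L (tqc n m r) (tqc n m s) = (mu (3 * n) m r)\<^sup>2 + (mu (3 * n) m (6 * n - r))\<^sup>2"
      using C m L \<open>r = s\<close> ne by (simp add: tqc_C dot_v2 power2_eq_square)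
    also have "\<dots> = ((real m)\<^sup>2 + (3 * real n - real r)\<^sup>2) / (2 * (real m)\<^sup>2)"
      using sq_id2[of "real m" "3 * real n" "real r"] m0 unfolding e1 e2 by simp
    also have "\<dots> = vv n m r"
    proof -
      have h1: "\<not> (n < r \<and> r < n + m)" "\<not> (r = n \<or> (n + m \<le> r \<and> r \<le> 3 * n - m))" using ne by auto
      show ?thesis unfolding vv_def if_not_P[OF h1(1)] if_not_P[OF h1(2)] by (rule refl)
    qed
    finally show ?thesis using \<open>r = s\<close> by simp
  qed
qed


lemma qfc_lo: "r \<le> N - m \<Longrightarrow> qfc N m r = v2 1 r 0 r"
  by (simp add: qfc_def)
lemma qfc_hi: "\<not> r \<le> N - m \<Longrightarrow> qfc N m r = v2 (mu N m r) r (- mu N m (2 * N - r)) (2 * N - r)"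
  by (simp add: qfc_def)

lemma tqc_qfc_orth:
  assumes m: "0 < m" "m < n" and L: "6 * n \<le> L"
    and r: "n \<le> r" "r < 3 * n" and j: "j < n"
  shows "dotL L (tqc n m r) (qfc n m j) = 0"
proof (cases "j \<le> n - m")
  case True
  from m(2) r show ?thesis
  proof (cases rule: range3)
    case A
    then show ?thesis using True m L j by (auto simp: tqc_A qfc_lo dot_v2)
  next
    case B
    then show ?thesis using True m L j by (auto simp: tqc_B qfc_lo dot_v2)
  next
    case C
    then show ?thesis using True m L j by (auto simp: tqc_C qfc_lo dot_v2)
  qed
next
  case False
  from m(2) r show ?thesis
  proof (cases rule: range3)
    case A
    show ?thesis
    proof (cases "j = 2 * n - r")
      case True
      then have e: "2 * n - j = r" using A j m by arith
      show ?thesis using A m L j False True e by (simp add: tqc_A qfc_hi dot_v2)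
    next
      case ne: False
      then have e: "2 * n - j \<noteq> r" "j \<noteq> r" "2 * n - r \<noteq> 2 * n - j" using A j m by arith+
      show ?thesis using A m L j False ne e by (simp add: tqc_A qfc_hi dot_v2)
    qed
  next
    case B
    then show ?thesis using False m L j by (auto simp: tqc_B qfc_hi dot_v2)
  next
    case C
    then show ?thesis using False m L j by (auto simp: tqc_C qfc_hi dot_v2)
  qed
qed



definition V3vec :: "nat \<Rightarrow> nat \<Rightarrow> (nat \<Rightarrow> real) \<Rightarrow> bool" where
  "V3vec n m b \<longleftrightarrow> (\<forall>j. 3 * n + m \<le> j \<longrightarrow> b j = 0) \<and> b (3 * n) = 0 \<and>
     (\<forall>r. 3 * n - m < r \<and> r < 3 * n \<longrightarrow> mu (3 * n) m (6 * n - r) * b r + mu (3 * n) m r * b (6 * n - r) = 0)"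

lemma V3vec_sum:
  assumes "\<And>i. i \<in> I \<Longrightarrow> V3vec n m (v i)"
  shows "V3vec n m (\<lambda>j. \<Sum>i\<in>I. c i * v i j)"
proof -
  have "(\<Sum>i\<in>I. c i * v i j) = 0" if "3 * n + m \<le> j" for j
    using assms that by (intro sum.neutral) (auto simp: V3vec_def)
  moreover have "(\<Sum>i\<in>I. c i * v i (3 * n)) = 0"
    using assms by (intro sum.neutral) (auto simp: V3vec_def)
  moreover have "mu (3 * n) m (6 * n - r) * (\<Sum>i\<in>I. c i * v i r) + mu (3 * n) m r * (\<Sum>i\<in>I. c i * v i (6 * n - r)) = 0"
    if "3 * n - m < r" "r < 3 * n" for r
  proof -
    have "mu (3 * n) m (6 * n - r) * (\<Sum>i\<in>I. c i * v i r) + mu (3 * n) m r * (\<Sum>i\<in>I. c i * v i (6 * n - r))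
      = (\<Sum>i\<in>I. c i * (mu (3 * n) m (6 * n - r) * v i r + mu (3 * n) m r * v i (6 * n - r)))"
      by (simp add: distrib_left sum.distrib sum_distrib_left mult.left_commute)
    also have "\<dots> = 0" using assms that by (intro sum.neutral) (auto simp: V3vec_def)
    finally show ?thesis .
  qed
  ultimately show ?thesis by (simp add: V3vec_def)
qed

lemma V3vec_diff:
  assumes "V3vec n m a" "V3vec n m b"
  shows "V3vec n m (\<lambda>j. a j - b j)"
proof -
  have "mu (3 * n) m (6 * n - r) * (a r - b r) + mu (3 * n) m r * (a (6 * n - r) - b (6 * n - r))
     = (mu (3 * n) m (6 * n - r) * a r + mu (3 * n) m r * a (6 * n - r)) - (mu (3 * n) m (6 * n - r) * b r + mu (3 * n) m r * b (6 * n - r))" for r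
    by (simp add: algebra_simps)
  then show ?thesis using assms unfolding V3vec_def by simp
qed

lemma V3vec_qfc:
  assumes m: "0 < m" "m < n" and r: "r < 3 * n"
  shows "V3vec n m (qfc (3 * n) m r)"
proof (cases "r \<le> 3 * n - m")
  case True
  then show ?thesis using m r by (auto simp: V3vec_def qfc_lo v2_def ev_def)
next
  case False
  have e: "2 * (3 * n) - r = 6 * n - r" by simp
  show ?thesis using False m r unfolding V3vec_def qfc_hi[OF False] e
    by (auto simp: v2_def ev_def)
qed

lemma V3vec_tqc:
  assumes m: "0 < m" "m < n" and r: "n \<le> r" "r < 3 * n"
  shows "V3vec n m (tqc n m r)"
  using m(2) r
proof (cases rule: range3)
  case A
  then show ?thesis using m by (auto simp: V3vec_def tqc_A v2_def ev_def)
next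
  case B
  then show ?thesis using m by (auto simp: V3vec_def tqc_B v2_def ev_def)
next
  case C
  have "tqc n m r = qfc (3 * n) m r"
    using C m by (simp add: tqc_C qfc_hi mult.assoc[symmetric])
  then show ?thesis using V3vec_qfc[OF m r(2)] by simp
qed



lemma mu_hi_pos: "0 < m \<Longrightarrow> 3 * n - m < r \<Longrightarrow> r < 3 * n \<Longrightarrow> mu (3 * n) m r > 0"
  by (subst mu_hi1) auto

lemma V3vec_span:
  assumes m: "0 < m" "m < n" and b: "V3vec n m b"
  shows "\<exists>c. \<forall>j. b j = (\<Sum>i<3 * n. c i * qfc (3 * n) m i j)"
proof -
  define c where "c i = (if i \<le> 3 * n - m then b i else b i / mu (3 * n) m i)" for i
  have q: "qfc (3 * n) m i j = (if i \<le> 3 * n - m then ev i j else mu (3 * n) m i * ev i j - mu (3 * n) m (6 * n - i) * ev (6 * n - i) j)" for i j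
    by (auto simp: qfc_def v2_def mult.assoc[symmetric])
  have "b j = (\<Sum>i<3 * n. c i * qfc (3 * n) m i j)" for j
  proof -
    consider (lo) "j < 3 * n" | (mid) "j = 3 * n" | (hi) "3 * n < j" "j < 3 * n + m" | (top) "3 * n + m \<le> j"
      by linarith
    then show ?thesis
    proof cases
      case lo
      have "(\<Sum>i<3 * n. c i * qfc (3 * n) m i j) = c j * qfc (3 * n) m j j + (\<Sum>i\<in>{..<3 * n} - {j}. c i * qfc (3 * n) m i j)"
        using lo by (subst sum.remove[of _ j]) auto
      also have "(\<Sum>i\<in>{..<3 * n} - {j}. c i * qfc (3 * n) m i j) = 0"
        using lo by (intro sum.neutral) (auto simp: q ev_def)
      also have "c j * qfc (3 * n) m j j = b j"
        using lo mu_hi_pos[OF m(1), of n j] by (auto simp: q ev_def c_def)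
      finally show ?thesis by simp
    next
      case mid
      have "(\<Sum>i<3 * n. c i * qfc (3 * n) m i j) = 0"
        using mid by (intro sum.neutral) (auto simp: q ev_def)
      then show ?thesis using b mid by (simp add: V3vec_def)
    next
      case hi
      define i0 where "i0 = 6 * n - j"
      have i0: "3 * n - m < i0" "i0 < 3 * n" "6 * n - i0 = j" using hi m unfolding i0_def by arith+
      have "(\<Sum>i<3 * n. c i * qfc (3 * n) m i j) = c i0 * qfc (3 * n) m i0 j + (\<Sum>i\<in>{..<3 * n} - {i0}. c i * qfc (3 * n) m i j)"
        using i0 by (subst sum.remove[of _ i0]) auto
      also have "(\<Sum>i\<in>{..<3 * n} - {i0}. c i * qfc (3 * n) m i j) = 0"
        using hi i0 by (intro sum.neutral) (auto simp: q ev_def)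
      also have "c i0 * qfc (3 * n) m i0 j = - b i0 / mu (3 * n) m i0 * mu (3 * n) m j"
        using hi i0 by (auto simp: q ev_def c_def)
      also have "\<dots> = b j"
      proof -
        have "mu (3 * n) m j * b i0 + mu (3 * n) m i0 * b j = 0"
          using b i0 unfolding V3vec_def by auto
        then show ?thesis using mu_hi_pos[OF m(1) i0(1,2)] by (simp add: field_simps)
      qed
      finally show ?thesis by simp
    next
      case top
      have "(\<Sum>i<3 * n. c i * qfc (3 * n) m i j) = 0"
        using top by (intro sum.neutral) (auto simp: q ev_def)
      then show ?thesis using b top by (simp add: V3vec_def)
    qed
  qed
  then show ?thesis by blast
qed

lemma Ev_sum: "Ev L (\<lambda>j. \<Sum>i\<in>I. c i * v i j) x = (\<Sum>i\<in>I. c i * Ev L (v i) x)"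
  unfolding Ev_def by (simp add: sum_distrib_left sum_distrib_right mult.assoc) (rule sum.swap)

lemma dot_sum_left: "dotL L (\<lambda>j. \<Sum>i\<in>I. c i * v i j) w = (\<Sum>i\<in>I. c i * dotL L (v i) w)"
  unfolding dotL_def by (simp add: sum_distrib_left sum_distrib_right mult.assoc) (rule sum.swap)

lemma dot_comm: "dotL L u w = dotL L w u"
  unfolding dotL_def by (simp add: mult.commute)

lemma dot_sum_right: "dotL L w (\<lambda>j. \<Sum>i\<in>I. c i * v i j) = (\<Sum>i\<in>I. c i * dotL L w (v i))"
  using dot_sum_left[of L c v I w] dot_comm[of L w] by (metis (no_types, lifting) dot_comm sum.cong)

lemma dot_diff_left: "dotL L (\<lambda>j. a j - b j) w = dotL L a w - dotL L b w"
  unfolding dotL_def by (simp add: algebra_simps sum_subtractf)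

lemma Ev_cong: "(\<And>j. j < L \<Longrightarrow> a j = b j) \<Longrightarrow> Ev L a = Ev L b"
  unfolding Ev_def by (auto intro!: sum.cong simp: fun_eq_iff)



definition th :: "nat \<Rightarrow> nat \<Rightarrow> real" where
  "th N i = (2 * real i + 1) * (pi / (2 * real N))"

lemma cos_sum_zero:
  assumes N: "0 < N" and j: "0 < j" "j < 2 * N"
  shows "(\<Sum>i<N. cos (real j * th N i)) = 0"
proof -
  define \<alpha> where "\<alpha> = real j * pi / (2 * real N)"
  have a0: "0 < \<alpha>" "\<alpha> < pi" using N j unfolding \<alpha>_def by (auto simp: field_simps)
  then have s0: "sin \<alpha> \<noteq> 0" using sin_gt_zero by force
  have t: "2 * sin \<alpha> * cos (real j * th N i) = sin (2 * real (Suc i) * \<alpha>) - sin (2 * real i * \<alpha>)" for i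
  proof -
    have e1: "real j * th N i = (2 * real i + 1) * \<alpha>" unfolding th_def \<alpha>_def by (simp add: field_simps)
    have "sin (2 * real (Suc i) * \<alpha>) = sin ((2 * real i + 1) * \<alpha> + \<alpha>)" by (simp add: algebra_simps)
    moreover have "sin (2 * real i * \<alpha>) = sin ((2 * real i + 1) * \<alpha> - \<alpha>)" by (simp add: algebra_simps)
    ultimately show ?thesis unfolding e1 by (simp add: sin_add sin_diff)
  qed
  have "2 * sin \<alpha> * (\<Sum>i<N. cos (real j * th N i)) = (\<Sum>i<N. sin (2 * real (Suc i) * \<alpha>) - sin (2 * real i * \<alpha>))"
    by (simp add: sum_distrib_left t)
  also have "\<dots> = sin (2 * real N * \<alpha>) - sin (2 * real 0 * \<alpha>)"
    by (rule sum_lessThan_telescope[where f = "\<lambda>i. sin (2 * real i * \<alpha>)"])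
  also have "2 * real N * \<alpha> = real j * pi" unfolding \<alpha>_def using N by simp
  also have "sin (real j * pi) = 0" by simp
  finally show ?thesis using s0 by simp
qed

lemma cos_sum_N:
  assumes N: "0 < N" and j: "j < 2 * N"
  shows "(\<Sum>i<N. cos (real j * th N i)) = (if j = 0 then real N else 0)"
  using cos_sum_zero[OF N _ j] by auto

lemma cos_cos_sum:
  assumes N: "0 < N" and a: "a < N" and b: "b < N"
  shows "(\<Sum>i<N. cos (real a * th N i) * cos (real b * th N i)) =
    real N / 2 * ((if a = b then 1 else 0) + (if a = 0 \<and> b = 0 then 1 else 0))"
proof -
  define d where "d = (if a \<le> b then b - a else a - b)"
  have cd: "cos ((real a - real b) * t) = cos (real d * t)" for t
  proof (cases "a \<le> b")
    case True
    then have "(real a - real b) * t = - (real d * t)" unfolding d_def by (simp add: of_nat_diff algebra_simps)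
    then show ?thesis by simp
  next
    case False
    then show ?thesis unfolding d_def by (simp add: of_nat_diff)
  qed
  have "(\<Sum>i<N. cos (real a * th N i) * cos (real b * th N i)) =
     (\<Sum>i<N. (cos (real d * th N i) + cos (real (a + b) * th N i)) / 2)"
    by (intro sum.cong refl) (simp add: cos_times_cos cd left_diff_distrib[symmetric] distrib_right[symmetric])
  also have "\<dots> = ((\<Sum>i<N. cos (real d * th N i)) + (\<Sum>i<N. cos (real (a + b) * th N i))) / 2"
    by (simp only: sum_divide_distrib[symmetric] sum.distrib)
  also have "\<dots> = real N / 2 * ((if a = b then 1 else 0) + (if a = 0 \<and> b = 0 then 1 else 0))"
  proof -
    have "d < 2 * N" "a + b < 2 * N" using a b unfolding d_def by auto
    moreover have "(d = 0) = (a = b)" unfolding d_def by auto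
    ultimately show ?thesis using N by (simp add: cos_sum_N del: of_nat_add)
  qed
  finally show ?thesis .
qed


lemma th_range: "0 < N \<Longrightarrow> i < N \<Longrightarrow> 0 \<le> th N i \<and> th N i \<le> pi"
proof -
  assume N: "0 < N" and i: "i < N"
  have "(2 * real i + 1) * pi \<le> (2 * real N) * pi"
    using i by (intro mult_right_mono) auto
  then show ?thesis unfolding th_def using N by (auto simp: divide_le_eq times_divide_eq_right)
qed

lemma cheb_nodes_th: "cheb_nodes N = (\<lambda>i. cos (th N i)) ` {..<N}"
proof -
  have "cheb_nodes N = (\<lambda>k. cos ((2 * real k - 1) * pi / (2 * real N))) ` Suc ` {..<N}"
    unfolding cheb_nodes_def image_Suc_lessThan ..
  also have "\<dots> = (\<lambda>i. cos (th N i)) ` {..<N}"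
    unfolding image_image th_def by (intro image_cong refl) (simp add: algebra_simps times_divide_eq_right)
  finally show ?thesis .
qed

lemma inj_th: "0 < N \<Longrightarrow> inj_on (\<lambda>i. cos (th N i)) {..<N}"
proof (rule inj_onI)
  fix i j assume N: "0 < N" and ij: "i \<in> {..<N}" "j \<in> {..<N}" "cos (th N i) = cos (th N j)"
  have r1: "0 \<le> th N i" "th N i \<le> pi" using th_range[OF N, of i] ij(1) by auto
  have r2: "0 \<le> th N j" "th N j \<le> pi" using th_range[OF N, of j] ij(2) by auto
  have "th N i = th N j" using cos_inj_pi[OF r1 r2 ij(3)] .
  then show "i = j" using N unfolding th_def by simp
qed

lemma sum_cheb_nodes: "0 < N \<Longrightarrow> (\<Sum>x\<in>cheb_nodes N. f x) = (\<Sum>i<N. f (cos (th N i)))"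
  unfolding cheb_nodes_th by (subst sum.reindex) (auto simp: inj_th)

lemma cheb_nodes_sub: "0 < n \<Longrightarrow> cheb_nodes n \<subseteq> cheb_nodes (3 * n)"
proof
  fix x assume "0 < n" "x \<in> cheb_nodes n"
  then obtain i where i: "i < n" "x = cos (th n i)" unfolding cheb_nodes_th by auto
  have "th n i = th (3 * n) (3 * i + 1)" unfolding th_def using \<open>0 < n\<close> by (simp add: field_simps)
  moreover have "3 * i + 1 < 3 * n" using i by simp
  ultimately show "x \<in> cheb_nodes (3 * n)" unfolding cheb_nodes_th using i by auto
qed

lemma node_sum:
  fixes f :: "real \<Rightarrow> real"
  assumes n: "0 < n" and y: "bij_betw y {1..2 * n} (Y_nodes n)"
  shows "(\<Sum>k\<in>{1..2 * n}. f (y k)) = (\<Sum>i<3 * n. f (cos (th (3 * n) i))) - (\<Sum>i<n. f (cos (th n i)))"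
proof -
  have "(\<Sum>k\<in>{1..2 * n}. f (y k)) = (\<Sum>x\<in>Y_nodes n. f x)"
    using sum.reindex_bij_betw[OF y] .
  also have "\<dots> = (\<Sum>x\<in>cheb_nodes (3 * n). f x) - (\<Sum>x\<in>cheb_nodes n. f x)"
    unfolding Y_nodes_def by (rule sum_diff) (use n cheb_nodes_sub[OF n] in \<open>auto simp: cheb_nodes_def\<close>)
  also have "\<dots> = (\<Sum>i<3 * n. f (cos (th (3 * n) i))) - (\<Sum>i<n. f (cos (th n i)))"
    using n by (simp add: sum_cheb_nodes)
  finally show ?thesis .
qed



definition ccx :: "nat \<Rightarrow> nat \<Rightarrow> real \<Rightarrow> real" where
  "ccx n r x = cc n (\<lambda>_. x) r 0"

lemma cc_ccx: "cc n y r k = ccx n r (y k)"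
  by (simp add: ccx_def cc_def)

definition uc1 :: "nat \<Rightarrow> nat \<Rightarrow> real" where
  "uc1 n r = (if r = n then 1 else if r < 2 * n then 1 / sqrt 2 else if r = 2 * n then 1 / sqrt 3 else sqrt (3 / 2))"
definition uc2 :: "nat \<Rightarrow> nat \<Rightarrow> real" where
  "uc2 n r = (if r = n then 0 else if r < 2 * n then 1 / sqrt 2 else if r = 2 * n then 1 / sqrt 3 else 0)"
definition ua2 :: "nat \<Rightarrow> nat \<Rightarrow> nat" where
  "ua2 n r = (if r < 2 * n then 2 * n - r else 0)"

lemma cheb_p_cos: "0 \<le> t \<Longrightarrow> t \<le> pi \<Longrightarrow> cheb_p a (cos t) = kap a * cos (real a * t)"
  by (simp add: cheb_p_alt arccos_cos)

lemma ccx_cos: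
  assumes n: "0 < n" and r: "n \<le> r" and t: "0 \<le> t" "t \<le> pi"
  shows "ccx n r (cos t) = sqrt (2 / pi) * (uc1 n r * cos (real r * t) + uc2 n r * cos (real (ua2 n r) * t))"
proof -
  have k: "sqrt 2 * sqrt (1 / pi) = sqrt (2 / pi)" by (simp add: real_sqrt_mult[symmetric])
  consider (a) "r = n" | (b) "n < r" "r < 2 * n" | (c) "r = 2 * n" | (d) "2 * n < r" "r \<noteq> n"
    using r by linarith
  then show ?thesis
  proof cases
    case a
    then show ?thesis using t n by (simp add: ccx_def cc_def uc1_def uc2_def ua2_def cheb_p_cos kap_def)
  next
    case b
    then show ?thesis using t by (simp add: ccx_def cc_def uc1_def uc2_def ua2_def cheb_p_cos kap_def algebra_simps add_divide_distrib)
  next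
    case c
    have n0: "r \<noteq> n" using c n by auto
    have "ccx n r (cos t) = (sqrt (2 / pi) * cos (real r * t) + sqrt 2 * sqrt (1 / pi)) / sqrt 3"
      using c t n0 by (simp add: ccx_def cc_def cheb_p_cos kap_def)
    then show ?thesis using c n0 unfolding k by (simp add: uc1_def uc2_def ua2_def algebra_simps add_divide_distrib)
  next
    case d
    then show ?thesis using t by (simp add: ccx_def cc_def uc1_def uc2_def ua2_def cheb_p_cos kap_def)
  qed
qed

lemma node_facts:
  assumes i: "i < n"
  shows "cos (real n * th n i) = 0" "sin (2 * real n * th n i) = 0" "cos (2 * real n * th n i) = -1"
proof -
  have n: "real n > 0" using i by simp
  have e1: "real n * th n i = real i * pi + pi / 2" unfolding th_def using n by (simp add: field_simps)
  have e2: "2 * real n * th n i = real (2 * i + 1) * pi" unfolding th_def using n by (simp add: field_simps)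
  show "cos (real n * th n i) = 0" unfolding e1 by (simp add: cos_add)
  show "sin (2 * real n * th n i) = 0" unfolding e2 by (rule sin_npi)
  show "cos (2 * real n * th n i) = -1" unfolding e2 by (simp only: cos_npi) simp
qed


definition S3 :: "nat \<Rightarrow> nat \<Rightarrow> real" where
  "S3 a b = (if a = b then 1 else 0) + (if a = 0 \<and> b = 0 then 1 else 0)"

definition EE :: "nat \<Rightarrow> nat \<Rightarrow> nat \<Rightarrow> real" where
  "EE n r s = uc1 n r * uc1 n s * S3 r s + uc1 n r * uc2 n s * S3 r (ua2 n s)
     + uc2 n r * uc1 n s * S3 (ua2 n r) s + uc2 n r * uc2 n s * S3 (ua2 n r) (ua2 n s)"

lemma range4:
  fixes n r :: nat
  assumes "n \<le> r" "r < 3 * n"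
  obtains (a) "r = n" | (b) "n < r" "r < 2 * n" | (c) "r = 2 * n" "r \<noteq> n" | (d) "2 * n < r" "r < 3 * n"
  using assms by linarith

lemma sq_facts: "1 / sqrt 2 * (1 / sqrt 2) = (1 / 2 :: real)" "1 / sqrt 3 * (1 / sqrt 3) = (1 / 3 :: real)"
  "sqrt (3 / 2) * sqrt (3 / 2) = (3 / 2 :: real)"
  by (simp_all add: real_sqrt_mult[symmetric])

lemma EE_val:
  assumes n: "0 < n" and r: "n \<le> r" "r < 3 * n" and s: "n \<le> s" "s < 3 * n"
  shows "EE n r s = (if r = s then (if 2 * n < r then 3 / 2 else 1) else 0)"
  using r
proof (cases rule: range4)
  case a
  from s show ?thesis
    by (cases rule: range4) (use a n in \<open>auto simp: EE_def S3_def uc1_def uc2_def ua2_def sq_facts\<close>)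
next
  case b
  from s show ?thesis
    by (cases rule: range4) (use b n in \<open>auto simp: EE_def S3_def uc1_def uc2_def ua2_def sq_facts\<close>)
next
  case c
  from s show ?thesis
    by (cases rule: range4) (use c n in \<open>auto simp: EE_def S3_def uc1_def uc2_def ua2_def sq_facts\<close>)
next
  case d
  from s show ?thesis
    by (cases rule: range4) (use d n in \<open>auto simp: EE_def S3_def uc1_def uc2_def ua2_def sq_facts\<close>)
qed


lemma X3_sum:
  assumes n: "0 < n" and r: "n \<le> r" "r < 3 * n" and s: "n \<le> s" "s < 3 * n"
  shows "(\<Sum>i<3 * n. ccx n r (cos (th (3 * n) i)) * ccx n s (cos (th (3 * n) i))) = 3 * real n / pi * EE n r s"
proof -
  define C where "C a i = cos (real a * th (3 * n) i)" for a i
  have n3: "0 < 3 * n" using n by simp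
  have ua: "ua2 n r < 3 * n" "ua2 n s < 3 * n" unfolding ua2_def using n by auto
  have pt: "ccx n r (cos (th (3 * n) i)) * ccx n s (cos (th (3 * n) i)) =
     2 / pi * (uc1 n r * uc1 n s * (C r i * C s i) + uc1 n r * uc2 n s * (C r i * C (ua2 n s) i)
      + uc2 n r * uc1 n s * (C (ua2 n r) i * C s i) + uc2 n r * uc2 n s * (C (ua2 n r) i * C (ua2 n s) i))"
    if "i < 3 * n" for i
  proof -
    have t: "0 \<le> th (3 * n) i" "th (3 * n) i \<le> pi" using th_range[OF n3 that] by auto
    have sq: "sqrt (2 / pi) * sqrt (2 / pi) = 2 / pi" by (simp add: real_sqrt_mult_self)
    have g: "\<And>K a b :: real. K * a * (K * b) = (K * K) * (a * b)" by (simp add: ac_simps)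
    show ?thesis unfolding ccx_cos[OF n r(1) t] ccx_cos[OF n s(1) t] C_def g sq
      by (simp add: distrib_left distrib_right ac_simps)
  qed
  have "(\<Sum>i<3 * n. ccx n r (cos (th (3 * n) i)) * ccx n s (cos (th (3 * n) i))) =
     2 / pi * (uc1 n r * uc1 n s * (\<Sum>i<3 * n. C r i * C s i) + uc1 n r * uc2 n s * (\<Sum>i<3 * n. C r i * C (ua2 n s) i)
      + uc2 n r * uc1 n s * (\<Sum>i<3 * n. C (ua2 n r) i * C s i) + uc2 n r * uc2 n s * (\<Sum>i<3 * n. C (ua2 n r) i * C (ua2 n s) i))"
    by (subst sum.cong[OF refl pt], simp, simp only: sum_distrib_left[symmetric] sum.distrib)
  also have "\<dots> = 2 / pi * (real (3 * n) / 2) * EE n r s"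
  proof -
    have cs: "(\<Sum>i<3 * n. C a i * C b i) = real (3 * n) / 2 * S3 a b" if "a < 3 * n" "b < 3 * n" for a b
      unfolding C_def S3_def using cos_cos_sum[OF n3 that] .
    show ?thesis using r s ua unfolding EE_def by (simp only: cs) (simp add: algebra_simps)
  qed
  finally show ?thesis by simp
qed

lemma ccx_Xn:
  assumes n: "0 < n" and r: "n \<le> r" "r < 3 * n" and i: "i < n"
  shows "ccx n r (cos (th n i)) = (if 2 * n < r then - (sqrt (2 / pi) * sqrt (3 / 2)) * cos (real (r - 2 * n) * th n i) else 0)"
proof -
  define t where "t = th n i"
  have t: "0 \<le> t" "t \<le> pi" using th_range[OF n i] unfolding t_def by auto
  note nf = node_facts[OF i, folded t_def]
  note cc = ccx_cos[OF n r(1) t]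
  have th: "th n i = t" by (simp add: t_def)
  from r show ?thesis
  proof (cases rule: range4)
    case a
    then show ?thesis using cc nf by (simp add: th uc2_def)
  next
    case b
    have "cos (real r * t) + cos (real (2 * n - r) * t) = 2 * cos (real n * t) * cos ((real r - real n) * t)"
    proof -
      have "real r * t = real n * t + (real r - real n) * t" "real (2 * n - r) * t = real n * t - (real r - real n) * t"
        using b by (auto simp: of_nat_diff algebra_simps)
      then show ?thesis by (simp add: cos_add cos_diff)
    qed
    then have "cos (real r * t) + cos (real (2 * n - r) * t) = 0" using nf by simp
    moreover have u: "uc1 n r = 1 / sqrt 2" "uc2 n r = 1 / sqrt 2" "ua2 n r = 2 * n - r"
      using b by (auto simp: uc1_def uc2_def ua2_def)
    moreover have "ccx n r (cos t) = sqrt (2 / pi) * (1 / sqrt 2 * (cos (real r * t) + cos (real (2 * n - r) * t)))"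
      using cc unfolding u by (simp only: distrib_left)
    ultimately show ?thesis using b th by simp
  next
    case c
    then show ?thesis using cc nf by (simp add: th uc1_def uc2_def ua2_def)
  next
    case d
    have "real r * t = 2 * real n * t + real (r - 2 * n) * t" using d by (simp add: of_nat_diff algebra_simps)
    then have "cos (real r * t) = - cos (real (r - 2 * n) * t)" using nf by (simp add: cos_add)
    then show ?thesis using cc d by (simp add: th uc1_def uc2_def ua2_def)
  qed
qed

lemma Xn_sum:
  assumes n: "0 < n" and r: "n \<le> r" "r < 3 * n" and s: "n \<le> s" "s < 3 * n"
  shows "(\<Sum>i<n. ccx n r (cos (th n i)) * ccx n s (cos (th n i))) = (if r = s \<and> 2 * n < r then 3 * real n / (2 * pi) else 0)"
proof (cases "2 * n < r \<and> 2 * n < s")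
  case True
  have k: "sqrt (2 / pi) * sqrt (3 / 2) * (sqrt (2 / pi) * sqrt (3 / 2)) = 3 / pi"
    by (simp add: real_sqrt_mult[symmetric])
  have "(\<Sum>i<n. ccx n r (cos (th n i)) * ccx n s (cos (th n i))) =
      (\<Sum>i<n. 3 / pi * (cos (real (r - 2 * n) * th n i) * cos (real (s - 2 * n) * th n i)))"
  proof (intro sum.cong refl)
    fix i assume "i \<in> {..<n}"
    then have i: "i < n" by simp
    show "ccx n r (cos (th n i)) * ccx n s (cos (th n i)) = 3 / pi * (cos (real (r - 2 * n) * th n i) * cos (real (s - 2 * n) * th n i))"
      unfolding ccx_Xn[OF n r i] ccx_Xn[OF n s i] k[symmetric] using True by simp
  qed
  also have "\<dots> = 3 / pi * (real n / 2 * S3 (r - 2 * n) (s - 2 * n))"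
  proof -
    have "r - 2 * n < n" "s - 2 * n < n" using True r s by auto
    from cos_cos_sum[OF n this] show ?thesis
      unfolding sum_distrib_left[symmetric] S3_def by (simp only:)
  qed
  also have "\<dots> = (if r = s \<and> 2 * n < r then 3 * real n / (2 * pi) else 0)"
    using True by (auto simp: S3_def)
  finally show ?thesis .
next
  case False
  then have z: "ccx n r (cos (th n i)) * ccx n s (cos (th n i)) = 0" if "i < n" for i
    using ccx_Xn[OF n r that] ccx_Xn[OF n s that] by auto
  have "(\<Sum>i<n. ccx n r (cos (th n i)) * ccx n s (cos (th n i))) = 0" by (rule sum.neutral) (simp add: z)
  then show ?thesis using False by auto
qed


lemma gram_cols:
  assumes n: "0 < n" and y: "bij_betw y {1..2 * n} (Y_nodes n)"
    and r: "n \<le> r" "r < 3 * n" and s: "n \<le> s" "s < 3 * n"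
  shows "(\<Sum>k\<in>{1..2 * n}. sigma n y r k * sigma n y s k) = (if r = s then 1 else 0)"
proof -
  have sq: "sqrt (pi / (3 * real n)) * sqrt (pi / (3 * real n)) = pi / (3 * real n)"
    by (simp add: real_sqrt_mult_self)
  have "(\<Sum>k\<in>{1..2 * n}. sigma n y r k * sigma n y s k) = (\<Sum>k\<in>{1..2 * n}. pi / (3 * real n) * (ccx n r (y k) * ccx n s (y k)))"
    by (intro sum.cong refl) (simp add: sigma_def cc_ccx sq[symmetric] ac_simps)
  also have "\<dots> = pi / (3 * real n) * (\<Sum>k\<in>{1..2 * n}. ccx n r (y k) * ccx n s (y k))"
    by (simp add: sum_distrib_left)
  also have "(\<Sum>k\<in>{1..2 * n}. ccx n r (y k) * ccx n s (y k)) =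
      3 * real n / pi * EE n r s - (if r = s \<and> 2 * n < r then 3 * real n / (2 * pi) else 0)"
    using node_sum[OF n y, of "\<lambda>x. ccx n r x * ccx n s x"] X3_sum[OF n r s] Xn_sum[OF n r s] by simp
  also have "pi / (3 * real n) * (3 * real n / pi * EE n r s - (if r = s \<and> 2 * n < r then 3 * real n / (2 * pi) else 0))
     = EE n r s - (if r = s \<and> 2 * n < r then 1 / 2 else 0)"
    using n by (auto simp: field_simps)
  also have "\<dots> = (if r = s then 1 else 0)"
    using EE_val[OF n r s] by auto
  finally show ?thesis .
qed



lemma orth_cols_rows:
  fixes M :: "nat \<Rightarrow> nat \<Rightarrow> real"
  assumes h: "\<And>i j. i < N \<Longrightarrow> j < N \<Longrightarrow> (\<Sum>l<N. M l i * M l j) = (if i = j then 1 else 0)"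
    and ij: "i < N" "j < N"
  shows "(\<Sum>l<N. M i l * M j l) = (if i = j then 1 else 0)"
proof -
  define A where "A = mat N N (\<lambda>(i, j). M i j)"
  have A: "A \<in> carrier_mat N N" and AT: "transpose_mat A \<in> carrier_mat N N" unfolding A_def by auto
  have "transpose_mat A * A = 1\<^sub>m N"
  proof (rule eq_matI)
    fix i j assume "i < dim_row (1\<^sub>m N :: real mat)" "j < dim_col (1\<^sub>m N :: real mat)"
    then have "i < N" "j < N" by auto
    then show "(transpose_mat A * A) $$ (i, j) = 1\<^sub>m N $$ (i, j)"
      using h[of i j] unfolding A_def
      by (simp add: index_mult_mat scalar_prod_def lessThan_atLeast0 mult.commute)
  qed (use A in auto)
  then have "A * transpose_mat A = 1\<^sub>m N" by (rule mat_mult_left_right_inverse[OF AT A])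
  then have "(A * transpose_mat A) $$ (i, j) = 1\<^sub>m N $$ (i, j)" by simp
  then show ?thesis using ij unfolding A_def
    by (simp add: index_mult_mat scalar_prod_def lessThan_atLeast0)
qed

lemma gram_rows:
  assumes n: "0 < n" and y: "bij_betw y {1..2 * n} (Y_nodes n)"
    and k: "k \<in> {1..2 * n}" and h: "h \<in> {1..2 * n}"
  shows "(\<Sum>r\<in>{n..<3 * n}. sigma n y r k * sigma n y r h) = (if k = h then 1 else 0)"
proof -
  define M where "M l i = sigma n y (n + i) (Suc l)" for l i
  have s1: "(\<Sum>k\<in>{1..2 * n}. f k) = (\<Sum>l<2 * n. f (Suc l))" for f :: "nat \<Rightarrow> real"
    using sum.atLeast1_atMost_eq[of f "2 * n"] by simp
  have s2: "(\<Sum>r\<in>{n..<3 * n}. f r) = (\<Sum>l<2 * n. f (n + l))" for f :: "nat \<Rightarrow> real"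
  proof -
    have "3 * n - n = 2 * n" by simp
    then show ?thesis using sum.atLeastLessThan_shift_0[of f n "3 * n"] by (simp add: lessThan_atLeast0 comp_def)
  qed
  have H: "(\<Sum>l<2 * n. M l i * M l j) = (if i = j then 1 else 0)" if "i < 2 * n" "j < 2 * n" for i j
    using gram_cols[OF n y, of "n + i" "n + j"] that unfolding M_def s1 by auto
  have k': "k - 1 < 2 * n" "h - 1 < 2 * n" using k h by auto
  have "(\<Sum>l<2 * n. M (k - 1) l * M (h - 1) l) = (if k - 1 = h - 1 then 1 else 0)"
    by (rule orth_cols_rows[OF H k'])
  moreover have "Suc (k - 1) = k" "Suc (h - 1) = h" using k h by auto
  ultimately show ?thesis unfolding M_def s2 using k h by auto
qed



lemma dot_v2_right: "a1 < L \<Longrightarrow> a2 < L \<Longrightarrow> dotL L b (v2 c1 a1 c2 a2) = c1 * b a1 + c2 * b a2"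
proof -
  assume a: "a1 < L" "a2 < L"
  have "dotL L b (v2 c1 a1 c2 a2) = dotL L (v2 c1 a1 c2 a2) b" by (rule dot_comm)
  also have "\<dots> = c1 * (\<Sum>j<L. ev a1 j * b j) + c2 * (\<Sum>j<L. ev a2 j * b j)"
    unfolding dotL_def v2_def by (simp add: distrib_right sum.distrib sum_distrib_left mult.assoc)
  finally show ?thesis using a by (simp add: sum_ev)
qed

lemma pair_zero:
  fixes p q x z :: real
  assumes "p > 0" "q > 0" "p * x - q * z = 0" "q * x + p * z = 0"
  shows "x = 0 \<and> z = 0"
proof -
  have "(p * p + q * q) * x = p * (p * x - q * z) + q * (q * x + p * z)" by (simp add: algebra_simps)
  then have "(p * p + q * q) * x = 0" using assms by simp
  moreover have "p * p + q * q > 0" using assms by (simp add: add_pos_pos)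
  ultimately have x: "x = 0" using assms by auto
  then show ?thesis using assms by simp
qed

lemma zero_vec:
  assumes m: "0 < m" "m < n" and L: "L = 6 * n" and V: "V3vec n m b"
    and b1: "\<And>j. j < n \<Longrightarrow> dotL L b (qfc n m j) = 0"
    and b2: "\<And>r. n \<le> r \<Longrightarrow> r < 3 * n \<Longrightarrow> dotL L b (tqc n m r) = 0"
  shows "b j = 0"
proof -
  have lo_pair: "b j = 0 \<and> b (2 * n - j) = 0" if j: "n - m < j" "j < n" for j
  proof -
    define r where "r = 2 * n - j"
    have r: "n \<le> r" "r < n + m" "2 * n - r = j" "\<not> j \<le> n - m" using j m unfolding r_def by arith+
    have p: "mu n m j > 0" using mu_lo2[OF m r(1,2)] r m by simp
    have q: "mu n m r > 0" using mu_lo1[OF m r(1,2)] r m by simp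
    have rL: "j < L" "r < L" using L r j by auto
    have e1: "mu n m j * b j - mu n m r * b r = 0"
      using b1[OF j(2)] rL unfolding qfc_hi[OF r(4)] r_def[symmetric] by (simp add: dot_v2_right)
    have e2: "mu n m r * b j + mu n m j * b r = 0"
      using b2[of r] r rL m unfolding tqc_A[OF r(1,2)] r(3) by (simp add: dot_v2_right)
    show ?thesis using pair_zero[OF p q e1 e2] unfolding r_def by simp
  qed
  have hi_pair: "b j = 0 \<and> b (6 * n - j) = 0" if j: "3 * n - m < j" "j < 3 * n" for j
  proof -
    have p: "mu (3 * n) m j > 0" using mu_hi1[OF m(1) j] j by simp
    have q: "mu (3 * n) m (6 * n - j) > 0" using mu_hi2[OF m(1) j] j m by simp
    have j6: "6 * n - j < L" "j < L" using j L by auto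
    have e1: "mu (3 * n) m j * b j - mu (3 * n) m (6 * n - j) * b (6 * n - j) = 0"
      using b2[of j] j m j6 unfolding tqc_C[OF m(2) j(1)] by (simp add: dot_v2_right)
    have e2: "mu (3 * n) m (6 * n - j) * b j + mu (3 * n) m j * b (6 * n - j) = 0"
      using V j unfolding V3vec_def by auto
    show ?thesis using pair_zero[OF p q e1 e2] .
  qed
  consider (a) "j \<le> n - m" | (b) "n - m < j" "j < n" | (c) "j = n" | (d) "n < j" "j < n + m"
    | (e) "n + m \<le> j" "j \<le> 3 * n - m" | (f) "3 * n - m < j" "j < 3 * n" | (g) "j = 3 * n"
    | (h) "3 * n < j" "j < 3 * n + m" | (i) "3 * n + m \<le> j" using m by linarith
  then show ?thesis
  proof cases
    case a
    then have "j < n" using m by arith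
    then show ?thesis using b1[of j] a L unfolding qfc_lo[OF a] by (simp add: dot_v2_right)
  next
    case b then show ?thesis using lo_pair by blast
  next
    case c
    have "mu n m n = 1 / 2" using m by (simp add: mu_def)
    moreover have "tqc n m n = v2 (mu n m n) n (mu n m n) n" using m tqc_A[of n n m] by simp
    moreover have "n < L" using L m by simp
    ultimately show ?thesis using b2[of n] c m by (simp add: dot_v2_right)
  next
    case d
    then have "n - m < 2 * n - j" "2 * n - j < n" "2 * n - (2 * n - j) = j" using m by arith+
    then show ?thesis using lo_pair[of "2 * n - j"] by simp
  next
    case e
    then show ?thesis using b2[of j] m L unfolding tqc_B[OF e] by (simp add: dot_v2_right)
  next
    case f then show ?thesis using hi_pair by blast
  next
    case g then show ?thesis using V by (simp add: V3vec_def)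
  next
    case h
    then have "3 * n - m < 6 * n - j" "6 * n - j < 3 * n" "6 * n - (6 * n - j) = j" using m by arith+
    then show ?thesis using hi_pair[of "6 * n - j"] by simp
  next
    case i then show ?thesis using V by (simp add: V3vec_def)
  qed
qed



definition psic :: "nat \<Rightarrow> nat \<Rightarrow> (nat \<Rightarrow> real) \<Rightarrow> nat \<Rightarrow> nat \<Rightarrow> real" where
  "psic n m y k = (\<lambda>j. \<Sum>r\<in>{n..<3 * n}. (sigma n y r k / sqrt (vv n m r)) * tqc n m r j)"

lemma vv_pos: "0 < m \<Longrightarrow> vv n m r > 0"
  unfolding vv_def by (auto intro!: divide_pos_pos add_pos_nonneg)

lemma psi_Ev:
  assumes "0 < m" "m < n"
  shows "psi n m y k = Ev (6 * n) (psic n m y k)"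
proof
  fix x
  have "psi n m y k x = (\<Sum>r\<in>{n..<3 * n}. (sigma n y r k / sqrt (vv n m r)) * Ev (6 * n) (tqc n m r) x)"
    unfolding psi_def by (intro sum.cong refl) (auto simp: tq_Ev[symmetric])
  also have "\<dots> = Ev (6 * n) (psic n m y k) x"
    unfolding psic_def by (rule Ev_sum[symmetric])
  finally show "psi n m y k x = Ev (6 * n) (psic n m y k) x" .
qed

lemma V3vec_psic:
  assumes "0 < m" "m < n"
  shows "V3vec n m (psic n m y k)"
  unfolding psic_def using assms by (intro V3vec_sum V3vec_tqc) auto

lemma dot_psic_tqc:
  assumes m: "0 < m" "m < n" and r: "n \<le> r" "r < 3 * n"
  shows "dotL (6 * n) (psic n m y k) (tqc n m r) = sigma n y r k * sqrt (vv n m r)"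
proof -
  have "dotL (6 * n) (psic n m y k) (tqc n m r) =
      (\<Sum>s\<in>{n..<3 * n}. (sigma n y s k / sqrt (vv n m s)) * (if s = r then vv n m s else 0))"
    unfolding psic_def dot_sum_left
  proof (intro sum.cong refl)
    fix s assume "s \<in> {n..<3 * n}"
    then have s: "n \<le> s" "s < 3 * n" by auto
    show "sigma n y s k / sqrt (vv n m s) * dotL (6 * n) (tqc n m s) (tqc n m r) =
      sigma n y s k / sqrt (vv n m s) * (if s = r then vv n m s else 0)"
      using tqc_orth[OF m order_refl s r] by simp
  qed
  also have "\<dots> = sigma n y r k / sqrt (vv n m r) * vv n m r"
  proof -
    have "(\<Sum>s\<in>{n..<3 * n}. (sigma n y s k / sqrt (vv n m s)) * (if s = r then vv n m s else 0))
       = (\<Sum>s\<in>{n..<3 * n}. (if s = r then sigma n y s k / sqrt (vv n m s) * vv n m s else 0))"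
      by (intro sum.cong refl) auto
    then show ?thesis using r by simp
  qed
  also have "\<dots> = sigma n y r k * (vv n m r / sqrt (vv n m r))" by simp
  also have "vv n m r / sqrt (vv n m r) = sqrt (vv n m r)"
    using vv_pos[OF m(1), of n r] by (simp add: real_div_sqrt)
  finally show ?thesis .
qed

lemma dot_psic_qfc:
  assumes m: "0 < m" "m < n" and j: "j < n"
  shows "dotL (6 * n) (psic n m y k) (qfc n m j) = 0"
  unfolding psic_def dot_sum_left using m j by (intro sum.neutral) (auto simp: tqc_qfc_orth)

lemma dot_psic_psic:
  assumes m: "0 < m" "m < n"
  shows "dotL (6 * n) (psic n m y k) (psic n m y h) = (\<Sum>r\<in>{n..<3 * n}. sigma n y r k * sigma n y r h)"
proof -
  have "dotL (6 * n) (psic n m y k) (psic n m y h) =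
     (\<Sum>r\<in>{n..<3 * n}. (sigma n y r h / sqrt (vv n m r)) * (sigma n y r k * sqrt (vv n m r)))"
    unfolding psic_def[of n m y h] dot_sum_right using m by (intro sum.cong refl) (auto simp: dot_psic_tqc)
  also have "\<dots> = (\<Sum>r\<in>{n..<3 * n}. sigma n y r k * sigma n y r h)"
  proof (intro sum.cong refl)
    fix r
    have "sqrt (vv n m r) > 0" using vv_pos[OF m(1), of n r] by simp
    then show "sigma n y r h / sqrt (vv n m r) * (sigma n y r k * sqrt (vv n m r)) = sigma n y r k * sigma n y r h"
      by (simp add: field_simps)
  qed
  finally show ?thesis .
qed


lemma V3_in_span:
  assumes m: "0 < m" "m < n" and b: "V3vec n m b"
  shows "Ev (6 * n) b \<in> V_space (3 * n) m"
proof -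
  obtain c where c: "\<And>j. b j = (\<Sum>i<3 * n. c i * qfc (3 * n) m i j)"
    using V3vec_span[OF m b] by blast
  have beq: "b = (\<lambda>j. \<Sum>i<3 * n. c i * qfc (3 * n) m i j)" using c by (simp add: fun_eq_iff)
  have "Ev (6 * n) b = (\<lambda>x. \<Sum>i<3 * n. c i * Ev (6 * n) (qfc (3 * n) m i) x)"
    unfolding beq by (rule ext, rule Ev_sum)
  also have "\<dots> = (\<lambda>x. \<Sum>i<3 * n. c i * qf (3 * n) m i x)"
    by (intro ext sum.cong refl) (simp add: qf_Ev[symmetric])
  finally show ?thesis unfolding V_space_def lin_span_def by blast
qed

lemma V_rep:
  assumes "f \<in> V_space N m" "2 * N \<le> L"
  shows "\<exists>c. f = Ev L (\<lambda>t. \<Sum>i<N. c i * qfc N m i t)"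
proof -
  obtain c where c: "f = (\<lambda>x. \<Sum>i<N. c i * qf N m i x)"
    using assms(1) unfolding V_space_def lin_span_def by blast
  have "f = (\<lambda>x. \<Sum>i<N. c i * Ev L (qfc N m i) x)"
    unfolding c using assms(2) by (intro ext sum.cong refl) (simp add: qf_Ev[symmetric])
  also have "\<dots> = Ev L (\<lambda>t. \<Sum>i<N. c i * qfc N m i t)"
    by (rule ext, rule Ev_sum[symmetric])
  finally show ?thesis by blast
qed

lemma qf_in_V: "j < N \<Longrightarrow> qf N m j \<in> V_space N m"
proof -
  assume j: "j < N"
  have "qf N m j = (\<lambda>x. \<Sum>i<N. ev j i * qf N m i x)"
    using j by (simp add: sum_ev)
  then show ?thesis unfolding V_space_def lin_span_def by blast
qed


theorem proposition3:
  fixes n m :: nat and y :: "nat \<Rightarrow> real"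
  assumes "0 < m" and "m < n"
    and "bij_betw y {1..2 * n} (Y_nodes n)"
  shows "W_space n m = lin_span {1..2 * n} (psi n m y)
    \<and> (\<forall>k\<in>{1..2 * n}. \<forall>h\<in>{1..2 * n}.
          cheb_inner (psi n m y k) (psi n m y h) = (if k = h then 1 else 0))"
proof -
  note m = assms(1,2)
  have n: "0 < n" using m by simp
  note y = assms(3)
  define L where "L = 6 * n"
  have psiE: "psi n m y k = Ev L (psic n m y k)" for k using psi_Ev[OF m] L_def by simp
  have orth: "cheb_inner (psi n m y k) (psi n m y h) = (if k = h then 1 else 0)"
    if "k \<in> {1..2 * n}" "h \<in> {1..2 * n}" for k h
  proof -
    have "cheb_inner (psi n m y k) (psi n m y h) = dotL L (psic n m y k) (psic n m y h)"
      unfolding psiE inner_Ev dotL_def ..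
    also have "\<dots> = (\<Sum>r\<in>{n..<3 * n}. sigma n y r k * sigma n y r h)"
      unfolding L_def by (rule dot_psic_psic[OF m])
    also have "\<dots> = (if k = h then 1 else 0)" by (rule gram_rows[OF n y that])
    finally show ?thesis .
  qed
  have Ilin: "f \<in> W_space n m" if fl: "f \<in> lin_span {1..2 * n} (psi n m y)" for f
  proof -
    obtain d where f: "f = (\<lambda>x. \<Sum>k\<in>{1..2 * n}. d k * psi n m y k x)"
      using fl unfolding lin_span_def by blast
    define B where "B = (\<lambda>j. \<Sum>k\<in>{1..2 * n}. d k * psic n m y k j)"
    have fB: "f = Ev L B" unfolding f B_def psiE by (rule ext, rule Ev_sum[symmetric])
    have VB: "V3vec n m B" unfolding B_def by (intro V3vec_sum V3vec_psic[OF m])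
    have "f \<in> V_space (3 * n) m" unfolding fB L_def by (rule V3_in_span[OF m VB])
    moreover have "cheb_inner f g = 0" if g: "g \<in> V_space n m" for g
    proof -
      obtain c where gc: "g = Ev L (\<lambda>t. \<Sum>i<n. c i * qfc n m i t)"
        using V_rep[OF g, of L] L_def by auto
      have "cheb_inner f g = dotL L B (\<lambda>t. \<Sum>i<n. c i * qfc n m i t)"
        unfolding fB gc inner_Ev dotL_def ..
      also have "\<dots> = (\<Sum>k\<in>{1..2 * n}. d k * (\<Sum>i<n. c i * dotL L (psic n m y k) (qfc n m i)))"
        unfolding B_def dot_sum_left dot_sum_right ..
      also have "\<dots> = 0" using dot_psic_qfc[OF m] L_def by simp
      finally show ?thesis .
    qed
    ultimately show ?thesis unfolding W_space_def by blast
  qed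
  have Wsub: "f \<in> lin_span {1..2 * n} (psi n m y)" if fW: "f \<in> W_space n m" for f
  proof -
    from fW have f3: "f \<in> V_space (3 * n) m" and fo: "\<forall>g\<in>V_space n m. cheb_inner f g = 0"
      unfolding W_space_def by auto
    obtain c where fa: "f = Ev L (\<lambda>t. \<Sum>i<3 * n. c i * qfc (3 * n) m i t)"
      using V_rep[OF f3, of L] L_def by auto
    define a where "a = (\<lambda>t. \<Sum>i<3 * n. c i * qfc (3 * n) m i t)"
    have fa': "f = Ev L a" unfolding fa a_def ..
    have Va: "V3vec n m a" unfolding a_def using m by (intro V3vec_sum V3vec_qfc) auto
    define d where "d k = dotL L a (psic n m y k)" for k
    define B where "B = (\<lambda>j. \<Sum>k\<in>{1..2 * n}. d k * psic n m y k j)"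
    define b where "b = (\<lambda>j. a j - B j)"
    have VB: "V3vec n m B" unfolding B_def by (intro V3vec_sum V3vec_psic[OF m])
    have Vb: "V3vec n m b" unfolding b_def by (rule V3vec_diff[OF Va VB])
    have b1: "dotL L b (qfc n m j) = 0" if j: "j < n" for j
    proof -
      have q: "qf n m j = Ev L (qfc n m j)" using qf_Ev[OF j, of L] L_def by simp
      have "cheb_inner f (qf n m j) = dotL L a (qfc n m j)"
        unfolding fa' q inner_Ev dotL_def ..
      moreover have "cheb_inner f (qf n m j) = 0" using fo qf_in_V[OF j] by blast
      moreover have "dotL L B (qfc n m j) = 0"
        unfolding B_def dot_sum_left using dot_psic_qfc[OF m j] L_def by simp
      ultimately show ?thesis unfolding b_def dot_diff_left by simp
    qed
    have b2: "dotL L b (tqc n m r) = 0" if r: "n \<le> r" "r < 3 * n" for r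
    proof -
      define w where "w s = dotL L a (tqc n m s) / sqrt (vv n m s)" for s
      define \<rho> where "\<rho> = sqrt (vv n m r)"
      have dk: "d k = (\<Sum>s\<in>{n..<3 * n}. w s * sigma n y s k)" for k
        unfolding d_def psic_def dot_sum_right w_def by (simp add: mult_ac)
      have "dotL L B (tqc n m r) = (\<Sum>k\<in>{1..2 * n}. (\<Sum>s\<in>{n..<3 * n}. w s * sigma n y s k) * (sigma n y r k * \<rho>))"
        unfolding B_def dot_sum_left dk \<rho>_def using dot_psic_tqc[OF m r] L_def by simp
      also have "\<dots> = (\<Sum>k\<in>{1..2 * n}. \<Sum>s\<in>{n..<3 * n}. w s * \<rho> * (sigma n y s k * sigma n y r k))"
        by (rule sum.cong[OF refl]) (simp add: sum_distrib_left sum_distrib_right mult_ac)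
      also have "\<dots> = (\<Sum>s\<in>{n..<3 * n}. \<Sum>k\<in>{1..2 * n}. w s * \<rho> * (sigma n y s k * sigma n y r k))"
        by (rule sum.swap)
      also have "\<dots> = (\<Sum>s\<in>{n..<3 * n}. w s * \<rho> * (if s = r then 1 else 0))"
      proof (rule sum.cong[OF refl])
        fix s assume "s \<in> {n..<3 * n}"
        then have s: "n \<le> s" "s < 3 * n" by auto
        show "(\<Sum>k\<in>{1..2 * n}. w s * \<rho> * (sigma n y s k * sigma n y r k)) = w s * \<rho> * (if s = r then 1 else 0)"
          unfolding sum_distrib_left[symmetric] gram_cols[OF n y s r] ..
      qed
      also have "\<dots> = w r * \<rho>"
      proof -
        have "(\<Sum>s\<in>{n..<3 * n}. w s * \<rho> * (if s = r then 1 else 0)) = (\<Sum>s\<in>{n..<3 * n}. (if s = r then w s * \<rho> else 0))"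
          by (rule sum.cong[OF refl]) simp
        then show ?thesis using r by simp
      qed
      also have "\<dots> = dotL L a (tqc n m r)"
        unfolding w_def \<rho>_def using vv_pos[OF m(1), of n r] by simp
      finally show ?thesis unfolding b_def dot_diff_left by simp
    qed
    have bz: "b j = 0" for j using zero_vec[OF m L_def Vb b1 b2] .
    have "f = Ev L B" unfolding fa' by (rule Ev_cong) (use bz in \<open>simp add: b_def\<close>)
    also have "\<dots> = (\<lambda>x. \<Sum>k\<in>{1..2 * n}. d k * psi n m y k x)"
      unfolding B_def psiE by (rule ext, rule Ev_sum)
    finally show ?thesis unfolding lin_span_def by blast
  qed
  show ?thesis using Ilin Wsub orth by blast
qed

end
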